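(* Let $u\in\Sigma^*$, $v\in\Sigma^+$. Let $(x_1,y_1)$ be the shortest form of $(u,v)$ and $n=|y_1|$. For $1\leq k<n$ let $(x_{k+1},y_{k+1})$ be the shortest form of the decomposition $(x_ky_k[1],\ y_k[2\cdots n]\,y_k[1])$. Let $\mathcal{D}_{u\$v}$ be a finite automaton over $\Sigma\cup\{\$\}$ (with $\$\notin\Sigma$) recognizing $\bigcup_{k=1}^{n}x_ky_k^*\,\$\,y_k^+$. Then $L(\mathcal{D}_{u\$v})=\{u'\$v'\mid u'\in\Sigma^*,\ v'\in\Sigma^+,\ u'v'^\omega=uv^\omega\}$.
   Context: A decomposition of an $\omega$-word $w$ is a pair $(u,v)$ with $u\in\Sigma^*$, $v\in\Sigma^+$ and $w=uv^\omega$. For a word $z$, $z[i]$ is its $i$-th letter and $z[i\cdots k]$ the subword from position $i$ to $k$ inclusive. Write $r\unlhd v$ if $r$ is a nonempty prefix of $v$, and $r\lhd v$ if moreover $r\neq v$. A smallest period of $(u,v)$ is a word $r$ with $r\unlhd v$, $r^\omega=v^\omega$, and $t^\omega\neq r^\omega$ for every $t\lhd r$. If $y$ is the smallest period of $(u,v)$, the shortest form of $(u,v)$ is the pair $(x,y)$ where $u=xy^i$, $v=y^j$ for some $i\geq0,j\geq1$ and $x$ is the shortest word with $u\in xy^*$. *)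

theory Defs
  imports "HOL-Library.Omega_Words_Fun"
begin

(* Finite words are lists, omega-words are 'a word = nat => 'a (Omega_Words_Fun);
  u \<frown> v\<^sup>\<omega> is u v^omega. *)

definition is_pref :: "'a list \<Rightarrow> 'a list \<Rightarrow> bool" where
  "is_pref r v \<longleftrightarrow> r \<noteq> [] \<and> (\<exists>z. v = r @ z)"

definition is_spref :: "'a list \<Rightarrow> 'a list \<Rightarrow> bool" where
  "is_spref r v \<longleftrightarrow> is_pref r v \<and> r \<noteq> v"

definition smallest_period :: "'a list \<Rightarrow> 'a list \<Rightarrow> 'a list \<Rightarrow> bool" where
  "smallest_period u v r \<longleftrightarrow>
     is_pref r v \<and> r\<^sup>\<omega> = v\<^sup>\<omega> \<and> (\<forall>t. is_spref t r \<longrightarrow> t\<^sup>\<omega> \<noteq> r\<^sup>\<omega>)"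

definition pow :: "'a list \<Rightarrow> nat \<Rightarrow> 'a list" where
  "pow y i = concat (replicate i y)"

definition is_shortest_form :: "'a list \<Rightarrow> 'a list \<Rightarrow> 'a list \<Rightarrow> 'a list \<Rightarrow> bool" where
  "is_shortest_form u v x y \<longleftrightarrow>
     smallest_period u v y \<and>
     (\<exists>i. u = x @ pow y i) \<and> (\<exists>j\<ge>1. v = pow y j) \<and>
     (\<forall>x'. (\<exists>i. u = x' @ pow y i) \<longrightarrow> length x \<le> length x')"

definition shortest_form :: "'a list \<Rightarrow> 'a list \<Rightarrow> 'a list \<times> 'a list" where
  "shortest_form u v = (THE p. is_shortest_form u v (fst p) (snd p))"

(* sf_seq u v k = (x_{k+1}, y_{k+1}) in the paper's 1-based numbering. *)
fun sf_seq :: "'a list \<Rightarrow> 'a list \<Rightarrow> nat \<Rightarrow> 'a list \<times> 'a list" where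
  "sf_seq u v 0 = shortest_form u v"
| "sf_seq u v (Suc k) =
     (let (x, y) = sf_seq u v k in shortest_form (x @ [hd y]) (tl y @ [hd y]))"

datatype 'a dsym = Sym 'a | Dollar

definition D_lang :: "'a list \<Rightarrow> 'a list \<Rightarrow> 'a dsym list set" where
  "D_lang u v = (\<Union>k < length (snd (sf_seq u v 0)).
     {map Sym (fst (sf_seq u v k) @ pow (snd (sf_seq u v k)) i) @ [Dollar]
        @ map Sym (pow (snd (sf_seq u v k)) j) | i j. j \<ge> 1})"

end

theory Submission
  imports Defs
begin

definition per :: "'a word \<Rightarrow> nat \<Rightarrow> bool" where
  "per s q \<longleftrightarrow> (\<forall>n. s (n + q) = s n)"

definition prim :: "'a list \<Rightarrow> bool" where
  "prim y \<longleftrightarrow> y \<noteq> [] \<and> (\<forall>q. 0 < q \<longrightarrow> per (y\<^sup>\<omega>) q \<longrightarrow> length y \<le> q)"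

lemma per_mult: "per s p \<Longrightarrow> per s (k * p)"
proof (induction k)
  case 0 then show ?case by (simp add: per_def)
next
  case (Suc k)
  then show ?case unfolding per_def by (metis add.assoc add.commute mult_Suc)
qed

lemma per_diff: "per s a \<Longrightarrow> per s b \<Longrightarrow> a \<le> b \<Longrightarrow> per s (b - a)"
  unfolding per_def by (metis add.assoc le_add_diff_inverse2)

lemma per_mod: "per s p \<Longrightarrow> per s q \<Longrightarrow> per s (q mod p)"
proof -
  assume a: "per s p" "per s q"
  have "per s ((q div p) * p)" using per_mult a(1) by blast
  moreover have "(q div p) * p \<le> q" by simp
  ultimately have "per s (q - (q div p) * p)" using per_diff a(2) by blast
  then show ?thesis by (simp add: minus_div_mult_eq_mod)
qed

lemma per_modn: "per s p \<Longrightarrow> s (n mod p) = s n"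
proof -
  assume "per s p"
  then have "per s ((n div p) * p)" by (rule per_mult)
  then have "s (n mod p + (n div p) * p) = s (n mod p)" unfolding per_def by blast
  then show ?thesis by (metis mod_div_decomp add.commute mult.commute)
qed

lemma prim_dvd: "prim y \<Longrightarrow> per (y\<^sup>\<omega>) q \<Longrightarrow> length y dvd q"
proof -
  assume p: "prim y" and q: "per (y\<^sup>\<omega>) q"
  have py: "per (y\<^sup>\<omega>) (length y)" using p by (simp add: per_def prim_def)
  have "per (y\<^sup>\<omega>) (q mod length y)" using per_mod[OF py q] .
  moreover have "q mod length y < length y" using p by (simp add: prim_def)
  ultimately have "q mod length y = 0" using p unfolding prim_def by (meson leD not_gr0)
  then show ?thesis by auto
qed

lemma iter_suffix: "y \<noteq> [] \<Longrightarrow> suffix a (y\<^sup>\<omega>) = (rotate a y)\<^sup>\<omega>"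
proof
  fix n assume y: "y \<noteq> []"
  have "rotate a y ! (n mod length y) = y ! ((a + n mod length y) mod length y)"
    using y by (simp add: nth_rotate)
  also have "\<dots> = y ! ((a + n) mod length y)" by (simp add: mod_add_right_eq)
  finally show "suffix a (y\<^sup>\<omega>) n = (rotate a y)\<^sup>\<omega> n" using y by simp
qed

lemma per_suffix:
  assumes "per s P" "0 < P" "per (suffix a s) q" shows "per s q"
  unfolding per_def
proof
  fix n
  have "per s (a * P)" using per_mult assms(1) by blast
  then have e1: "s (n + a*P) = s n" "s (n + q + a*P) = s (n + q)" by (simp_all add: per_def)
  have "a \<le> a * P" using assms(2) by (cases P) auto
  then have "a \<le> n + a * P" by linarith
  then obtain m where m: "n + a*P = a + m" by (metis le_add_diff_inverse)
  have "suffix a s (m + q) = suffix a s m" using assms(3) by (simp add: per_def)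
  then have e2: "s (a + m + q) = s (a + m)" by (simp add: add.assoc)
  have e3: "n + q + a*P = a + m + q" using m by simp
  have "s (n + q) = s (n + q + a*P)" using e1(2) by simp
  also have "\<dots> = s (a + m + q)" by (rule arg_cong[OF e3])
  also have "\<dots> = s (a + m)" using e2 .
  also have "\<dots> = s (n + a*P)" using m by simp
  also have "\<dots> = s n" using e1(1) .
  finally show "s (n + q) = s n" .
qed

lemma prim_rotate: "prim y \<Longrightarrow> prim (rotate a y)"
proof -
  assume p: "prim y"
  have y: "y \<noteq> []" using p by (simp add: prim_def)
  have py: "per (y\<^sup>\<omega>) (length y)" using y by (simp add: per_def)
  show ?thesis unfolding prim_def
  proof (intro conjI allI impI)
    show "rotate a y \<noteq> []" using y by simp
    fix q assume "0 < q" "per ((rotate a y)\<^sup>\<omega>) q"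
    then have "per (suffix a (y\<^sup>\<omega>)) q" using iter_suffix[OF y, of a] by simp
    then have "per (y\<^sup>\<omega>) q" using per_suffix[OF py] y by simp
    then show "length (rotate a y) \<le> q" using p \<open>0 < q\<close> by (simp add: prim_def)
  qed
qed

lemma prim_same_len: "prim a \<Longrightarrow> prim b \<Longrightarrow> a\<^sup>\<omega> = b\<^sup>\<omega> \<Longrightarrow> length a = length b"
proof -
  assume a: "prim a" and b: "prim b" and e: "a\<^sup>\<omega> = b\<^sup>\<omega>"
  have "per (a\<^sup>\<omega>) (length a)" "per (b\<^sup>\<omega>) (length b)" using a b by (simp_all add: per_def prim_def)
  then have "length a \<le> length b" "length b \<le> length a" using a b e unfolding prim_def by auto
  then show ?thesis by simp
qed

lemma iter_eq_len: "a \<noteq> [] \<Longrightarrow> length a = length b \<Longrightarrow> a\<^sup>\<omega> = b\<^sup>\<omega> \<Longrightarrow> a = b"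
proof -
  assume "a \<noteq> []" "length a = length b" "a\<^sup>\<omega> = b\<^sup>\<omega>"
  then have "prefix (length a) (a\<^sup>\<omega>) = prefix (length b) (b\<^sup>\<omega>)" by simp
  moreover have "prefix (length a) (a\<^sup>\<omega>) = a" using iter_unroll[of a] \<open>a \<noteq> []\<close>
    by (metis length_greater_0_conv prefix_conc_length)
  moreover have "prefix (length b) (b\<^sup>\<omega>) = b" using iter_unroll[of b] \<open>a \<noteq> []\<close> \<open>length a = length b\<close>
    by (metis length_greater_0_conv prefix_conc_length)
  ultimately show ?thesis by simp
qed

lemma pow_Suc: "pow y (Suc i) = y @ pow y i" by (simp add: pow_def)
lemma pow_Suc2: "pow y (Suc i) = pow y i @ y"
  by (simp add: pow_def replicate_append_same[symmetric])
lemma pow_0[simp]: "pow y 0 = []" by (simp add: pow_def)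
lemma length_pow[simp]: "length (pow y i) = i * length y"
  by (induction i) (simp_all add: pow_Suc)

lemma pow_conc_iter: "y \<noteq> [] \<Longrightarrow> pow y i \<frown> y\<^sup>\<omega> = y\<^sup>\<omega>"
proof (induction i)
  case 0 then show ?case by simp
next
  case (Suc i)
  then show ?case by (metis conc_conc iter_unroll length_greater_0_conv pow_Suc)
qed

lemma pow_prefix: "y \<noteq> [] \<Longrightarrow> pow y i = prefix (i * length y) (y\<^sup>\<omega>)"
  using pow_conc_iter[of y i] by (metis length_pow prefix_conc_length)

lemma iter_prefix: "per s N \<Longrightarrow> 0 < N \<Longrightarrow> (prefix N s)\<^sup>\<omega> = s"
proof
  fix n assume "per s N" "0 < N"
  then show "(prefix N s)\<^sup>\<omega> n = s n" by (simp add: per_modn)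
qed

lemma per_iter: "y \<noteq> [] \<Longrightarrow> per (y\<^sup>\<omega>) (length y)"
  by (simp add: per_def)

lemma pow_iter: "y \<noteq> [] \<Longrightarrow> 1 \<le> j \<Longrightarrow> (pow y j)\<^sup>\<omega> = y\<^sup>\<omega>"
  using iter_prefix[of "y\<^sup>\<omega>" "j * length y"] per_mult[OF per_iter, of y j] pow_prefix[of y j]
  by simp


lemma sp_prim:
  assumes "smallest_period u v r" shows "prim r \<and> r\<^sup>\<omega> = v\<^sup>\<omega>"
proof -
  have r: "r \<noteq> []" "r\<^sup>\<omega> = v\<^sup>\<omega>" "\<forall>t. is_spref t r \<longrightarrow> t\<^sup>\<omega> \<noteq> r\<^sup>\<omega>"
    using assms by (auto simp: smallest_period_def is_pref_def)
  have "prim r" unfolding prim_def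
  proof (intro conjI allI impI)
    show "r \<noteq> []" by fact
    fix q assume q: "0 < q" "per (r\<^sup>\<omega>) q"
    show "length r \<le> q"
    proof (rule ccontr)
      assume "\<not> length r \<le> q"
      then have ql: "q < length r" by simp
      define t where "t = take q r"
      have tl: "length t = q" using ql by (simp add: t_def)
      have "is_spref t r" unfolding is_spref_def is_pref_def
        using q ql tl by (metis append_take_drop_id less_irrefl list.size(3) t_def)
      moreover have "t\<^sup>\<omega> = r\<^sup>\<omega>"
      proof
        fix n
        have "t\<^sup>\<omega> n = r ! (n mod q)" using q tl by (simp add: t_def)
        also have "\<dots> = r\<^sup>\<omega> (n mod q)"
        proof -
          have "n mod q < length r" using q ql by (meson mod_less_divisor order.strict_trans)
          then show ?thesis using r(1) by simp
        qed
        also have "\<dots> = r\<^sup>\<omega> n" using per_modn[OF q(2)] .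
        finally show "t\<^sup>\<omega> n = r\<^sup>\<omega> n" .
      qed
      ultimately show False using r(3) by blast
    qed
  qed
  then show ?thesis using r by simp
qed

lemma prim_pow:
  assumes "prim r" "r\<^sup>\<omega> = v\<^sup>\<omega>" "v \<noteq> []" shows "\<exists>j\<ge>1. v = pow r j"
proof -
  have r: "r \<noteq> []" using assms by (simp add: prim_def)
  have "per (r\<^sup>\<omega>) (length v)" using assms(2,3) per_iter by metis
  then have "length r dvd length v" using prim_dvd assms(1) by blast
  then obtain j where j: "length v = j * length r" by (metis dvd_def mult.commute)
  have "v = prefix (length v) (v\<^sup>\<omega>)" using assms(3)
    by (metis iter_unroll length_greater_0_conv prefix_conc_length)
  also have "\<dots> = pow r j" using j assms(2) pow_prefix[OF r] by simp
  finally have "v = pow r j" .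
  moreover have "j \<ge> 1" using j assms(3) by (cases j) auto
  ultimately show ?thesis by blast
qed

lemma sp_exists:
  assumes "v \<noteq> []" shows "\<exists>r. smallest_period u v r"
proof -
  let ?s = "v\<^sup>\<omega>"
  have ex: "0 < length v \<and> per ?s (length v)" using assms per_iter by auto
  define q where "q = (LEAST q. 0 < q \<and> per ?s q)"
  have q: "0 < q" "per ?s q" using LeastI[of "\<lambda>q. 0 < q \<and> per ?s q", OF ex] by (simp_all add: q_def)
  have qmin: "\<And>q'. 0 < q' \<Longrightarrow> per ?s q' \<Longrightarrow> q \<le> q'" unfolding q_def by (simp add: Least_le)
  have qv: "q \<le> length v" using qmin ex by blast
  define r where "r = take q v"
  have rl: "length r = q" using qv by (simp add: r_def)
  have rw: "r\<^sup>\<omega> = ?s"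
  proof
    fix n
    have "r\<^sup>\<omega> n = v ! (n mod q)" using q rl qv by (simp add: r_def)
    also have "\<dots> = ?s (n mod q)"
    proof -
      have "n mod q < length v" using q qv by (meson mod_less_divisor order_less_le_trans)
      then show ?thesis using assms by simp
    qed
    also have "\<dots> = ?s n" using per_modn[OF q(2)] .
    finally show "r\<^sup>\<omega> n = ?s n" .
  qed
  have "smallest_period u v r" unfolding smallest_period_def
  proof (intro conjI allI impI)
    show "is_pref r v" unfolding is_pref_def using rl q
      by (metis append_take_drop_id length_0_conv less_irrefl r_def)
    show "r\<^sup>\<omega> = ?s" by fact
    fix t assume t: "is_spref t r"
    show "t\<^sup>\<omega> \<noteq> r\<^sup>\<omega>"
    proof
      assume e: "t\<^sup>\<omega> = r\<^sup>\<omega>"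
      have tne: "t \<noteq> []" and tr: "length t < length r" using t unfolding is_spref_def is_pref_def
        by auto
      have "per ?s (length t)" using e rw per_iter[OF tne] by simp
      then have "q \<le> length t" using qmin tne by blast
      then show False using tr rl by simp
    qed
  qed
  then show ?thesis by blast
qed

lemma sp_unique:
  assumes "smallest_period u v r1" "smallest_period u v r2" shows "r1 = r2"
proof -
  have "prim r1 \<and> r1\<^sup>\<omega> = v\<^sup>\<omega>" "prim r2 \<and> r2\<^sup>\<omega> = v\<^sup>\<omega>" using sp_prim assms by blast+
  then have l: "length r1 = length r2" using prim_same_len by metis
  have "\<exists>z1. v = r1 @ z1" "\<exists>z2. v = r2 @ z2" using assms unfolding smallest_period_def is_pref_def by blast+
  then obtain z1 z2 where "v = r1 @ z1" "v = r2 @ z2" by blast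
  then show ?thesis using l by (metis append_eq_append_conv)
qed

lemma sf_exists_unique:
  assumes "v \<noteq> []" shows "\<exists>!p. is_shortest_form u v (fst p) (snd p)"
proof -
  obtain y where y: "smallest_period u v y" using sp_exists assms by blast
  have py: "prim y" "y\<^sup>\<omega> = v\<^sup>\<omega>" using sp_prim[OF y] by auto
  obtain j where j: "j \<ge> 1" "v = pow y j" using prim_pow[OF py assms] by blast
  let ?P = "\<lambda>x. \<exists>i. u = x @ pow y i"
  have "?P u" by (rule exI[of _ 0]) simp
  then obtain x where x: "?P x" "\<forall>x'. ?P x' \<longrightarrow> length x \<le> length x'"
    using ex_has_least_nat[of ?P u length] by blast
  have sfx: "is_shortest_form u v x y" unfolding is_shortest_form_def using y x j by blast
  show ?thesis
  proof (rule ex1I[of _ "(x,y)"])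
    show "is_shortest_form u v (fst (x, y)) (snd (x, y))" using sfx by simp
    fix p assume p: "is_shortest_form u v (fst p) (snd p)"
    then have "snd p = y" using sp_unique y unfolding is_shortest_form_def by blast
    then have px: "?P (fst p)" "\<forall>x'. ?P x' \<longrightarrow> length (fst p) \<le> length x'"
      using p unfolding is_shortest_form_def by auto
    have "length (fst p) \<le> length x" using px(2) x(1) by blast
    moreover have "length x \<le> length (fst p)" using x(2) px(1) by blast
    ultimately have "length (fst p) = length x" by simp
    moreover obtain i i' where "u = x @ pow y i" "u = fst p @ pow y i'" using px(1) x(1) by blast
    ultimately have "fst p = x" by (metis append_eq_append_conv)
    then show "p = (x, y)" using \<open>snd p = y\<close> by (metis prod.collapse)
  qed
qed

lemma sf_props:
  assumes "v \<noteq> []" "shortest_form u v = (x, y)"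
  shows "prim y \<and> x \<frown> y\<^sup>\<omega> = u \<frown> v\<^sup>\<omega> \<and> (\<forall>x'. x \<noteq> x' @ y)
         \<and> (\<exists>i. u = x @ pow y i) \<and> (\<exists>j\<ge>1. v = pow y j)"
proof -
  have "is_shortest_form u v x y"
    using theI'[OF sf_exists_unique[OF assms(1), of u]] assms(2)
    unfolding shortest_form_def by simp
  then have sp: "smallest_period u v y" and xi: "\<exists>i. u = x @ pow y i" and j: "\<exists>j\<ge>1. v = pow y j"
    and mn: "\<forall>x'. (\<exists>i. u = x' @ pow y i) \<longrightarrow> length x \<le> length x'"
    unfolding is_shortest_form_def by blast+
  have py: "prim y" "y\<^sup>\<omega> = v\<^sup>\<omega>" using sp_prim[OF sp] by auto
  have yne: "y \<noteq> []" using py by (simp add: prim_def)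
  obtain i where i: "u = x @ pow y i" using xi by blast
  have w: "x \<frown> y\<^sup>\<omega> = u \<frown> v\<^sup>\<omega>" using i py(2) pow_conc_iter[OF yne, of i]
    by (metis conc_conc)
  have ne: "\<forall>x'. x \<noteq> x' @ y"
  proof (intro allI notI)
    fix x' assume "x = x' @ y"
    then have "u = x' @ pow y (Suc i)" using i by (simp add: pow_Suc)
    then have "length x \<le> length x'" using mn by blast
    then show False using \<open>x = x' @ y\<close> yne by simp
  qed
  show ?thesis using py w ne xi j by blast
qed

lemma uniq_x_aux:
  assumes "prim z" "a \<frown> z\<^sup>\<omega> = c \<frown> z\<^sup>\<omega>" "\<forall>x'. c \<noteq> x' @ z" "length a \<le> length c"
  shows "a = c"
proof -
  have zne: "z \<noteq> []" using assms(1) by (simp add: prim_def)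
  define d where "d = length c - length a"
  have c: "c = a @ prefix d (z\<^sup>\<omega>)"
    using arg_cong[OF assms(2), of "prefix (length c)"] assms(4) by (simp add: d_def)
  have "suffix (length c) (a \<frown> z\<^sup>\<omega>) = z\<^sup>\<omega>" using assms(2) by simp
  then have sd: "suffix d (z\<^sup>\<omega>) = z\<^sup>\<omega>" using assms(4) by (simp add: d_def)
  have "per (z\<^sup>\<omega>) d" unfolding per_def
  proof
    fix n show "z\<^sup>\<omega> (n + d) = z\<^sup>\<omega> n" using fun_cong[OF sd, of n] by (simp add: add.commute)
  qed
  then have "length z dvd d" using prim_dvd assms(1) by blast
  then obtain k where k: "d = k * length z" by (metis dvd_def mult.commute)
  have "d = 0"
  proof (rule ccontr)
    assume "d \<noteq> 0"
    then obtain m where m: "k = Suc m" using k by (cases k) auto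
    have "c = a @ pow z k" using c k pow_prefix[OF zne, of k] by simp
    then have "c = (a @ pow z m) @ z" using m by (simp add: pow_Suc2)
    then show False using assms(3) by blast
  qed
  then show ?thesis using c by simp
qed

lemma uniq_x:
  assumes "prim z" "a \<frown> z\<^sup>\<omega> = c \<frown> z\<^sup>\<omega>" "\<forall>x'. a \<noteq> x' @ z" "\<forall>x'. c \<noteq> x' @ z"
  shows "a = c"
  using uniq_x_aux[OF assms(1,2,4)] uniq_x_aux[OF assms(1) assms(2)[symmetric] assms(3)]
  by (cases "length a \<le> length c") auto


lemma seq_inv:
  assumes "v \<noteq> []"
  shows "sf_seq u v k = (x, y) \<Longrightarrow> prim y \<and> y = rotate k (snd (sf_seq u v 0))
          \<and> x \<frown> y\<^sup>\<omega> = u \<frown> v\<^sup>\<omega> \<and> (\<forall>x'. x \<noteq> x' @ y)"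
proof (induction k arbitrary: x y)
  case 0
  then have "shortest_form u v = (x, y)" by simp
  then show ?case using sf_props[OF assms] 0 by simp
next
  case (Suc k)
  obtain x0 y0 where k: "sf_seq u v k = (x0, y0)" by (cases "sf_seq u v k") auto
  have IH: "prim y0" "y0 = rotate k (snd (sf_seq u v 0))" "x0 \<frown> y0\<^sup>\<omega> = u \<frown> v\<^sup>\<omega>"
    using Suc.IH[OF k] by auto
  have y0ne: "y0 \<noteq> []" using IH(1) by (simp add: prim_def)
  define v' where "v' = tl y0 @ [hd y0]"
  have v'r: "v' = rotate 1 y0" using y0ne by (simp add: v'_def rotate1_hd_tl)
  have v'ne: "v' \<noteq> []" by (simp add: v'_def)
  have sf: "shortest_form (x0 @ [hd y0]) v' = (x, y)" using Suc.prems k by (simp add: v'_def)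
  note P = sf_props[OF v'ne sf]
  have py: "prim y" using P by blast
  have yne: "y \<noteq> []" using py by (simp add: prim_def)
  obtain j where j: "j \<ge> 1" "v' = pow y j" using P by blast
  have pv': "prim v'" unfolding v'r by (rule prim_rotate[OF IH(1)])
  have "v'\<^sup>\<omega> = y\<^sup>\<omega>" using pow_iter[OF yne j(1)] j(2) by simp
  then have "length v' = length y" using prim_same_len[OF pv' py] by simp
  then have "j = 1" using j yne by simp
  then have yv: "y = v'" using j by (simp add: pow_def)
  have v'w: "v'\<^sup>\<omega> = suffix 1 (y0\<^sup>\<omega>)" using iter_suffix[OF y0ne, of 1] v'r by simp
  have "prefix 1 (y0\<^sup>\<omega>) = [hd y0]" using y0ne by (simp add: subsequence_def hd_conv_nth)
  then have "[hd y0] \<frown> v'\<^sup>\<omega> = y0\<^sup>\<omega>" using v'w prefix_suffix[of "y0\<^sup>\<omega>" 1] by simp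
  then have "x \<frown> y\<^sup>\<omega> = u \<frown> v\<^sup>\<omega>" using P IH(3) by (metis conc_conc)
  moreover have "y = rotate (Suc k) (snd (sf_seq u v 0))" using yv IH(2) v'r by simp
  ultimately show ?case using P py by blast
qed

lemma mod_aux: "0 < (n::nat) \<Longrightarrow> (n - r mod n + r) mod n = 0"
proof -
  assume n: "0 < n"
  have "r mod n < n" using n by simp
  then have "n - r mod n + r = n * Suc (r div n)"
    by (metis add.commute add_diff_inverse_nat diff_add_inverse2 div_mult_mod_eq
        less_imp_le_nat mult.commute mult_Suc_right not_less le_add_diff_inverse2 add.assoc)
  then show ?thesis by simp
qed

theorem proposition2:
  fixes u v :: "'a list" and L :: "'a dsym list set"
  assumes "v \<noteq> []"
    and "L = D_lang u v"
  shows "L = {map Sym u' @ [Dollar] @ map Sym v' | u' v'.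
                v' \<noteq> [] \<and> u' \<frown> v'\<^sup>\<omega> = u \<frown> v\<^sup>\<omega>}"
proof -
  obtain X0 Y0 where s0: "sf_seq u v 0 = (X0, Y0)" by (cases "sf_seq u v 0") auto
  note I0 = seq_inv[OF assms(1) s0]
  have I0': "prim Y0" "X0 \<frown> Y0\<^sup>\<omega> = u \<frown> v\<^sup>\<omega>" using I0 by blast+
  have Y0ne: "Y0 \<noteq> []" using I0 unfolding prim_def by blast
  show ?thesis unfolding assms(2) D_lang_def
  proof (intro equalityI subsetI)
    fix s assume "s \<in> (\<Union>k<length (snd (sf_seq u v 0)).
          {map Sym (fst (sf_seq u v k) @ pow (snd (sf_seq u v k)) i) @ [Dollar]
            @ map Sym (pow (snd (sf_seq u v k)) j) | i j. j \<ge> 1})"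
    then obtain k i j where j: "j \<ge> 1" and
      s: "s = map Sym (fst (sf_seq u v k) @ pow (snd (sf_seq u v k)) i) @ [Dollar]
            @ map Sym (pow (snd (sf_seq u v k)) j)" by blast
    obtain xk yk where sk: "sf_seq u v k = (xk, yk)" by (cases "sf_seq u v k") auto
    note Ik = seq_inv[OF assms(1) sk]
    have ykne: "yk \<noteq> []" using Ik unfolding prim_def by blast
    have "pow yk j \<noteq> []" using ykne j by (metis length_0_conv length_pow mult_is_0 not_one_le_zero)
    moreover have "(xk @ pow yk i) \<frown> (pow yk j)\<^sup>\<omega> = u \<frown> v\<^sup>\<omega>"
      using pow_iter[OF ykne j] pow_conc_iter[OF ykne, of i] Ik by (metis conc_conc)
    ultimately show "s \<in> {map Sym u' @ [Dollar] @ map Sym v' | u' v'.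
                v' \<noteq> [] \<and> u' \<frown> v'\<^sup>\<omega> = u \<frown> v\<^sup>\<omega>}"
      using s sk by (intro CollectI exI[of _ "xk @ pow yk i"] exI[of _ "pow yk j"]) simp
  next
    fix s assume "s \<in> {map Sym u' @ [Dollar] @ map Sym v' | u' v'.
                v' \<noteq> [] \<and> u' \<frown> v'\<^sup>\<omega> = u \<frown> v\<^sup>\<omega>}"
    then obtain u' v' where s: "s = map Sym u' @ [Dollar] @ map Sym v'" and
      v': "v' \<noteq> []" "u' \<frown> v'\<^sup>\<omega> = u \<frown> v\<^sup>\<omega>" by blast
    obtain x' z where sf: "shortest_form u' v' = (x', z)" by (cases "shortest_form u' v'") auto
    note P = sf_props[OF v'(1) sf]
    have pz: "prim z" and zw: "x' \<frown> z\<^sup>\<omega> = u \<frown> v\<^sup>\<omega>" and zn: "\<forall>x''. x' \<noteq> x'' @ z"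
      using P v'(2) by auto
    obtain i where i: "u' = x' @ pow z i" using P by blast
    obtain j where j: "j \<ge> 1" "v' = pow z j" using P by blast
    have zne: "z \<noteq> []" using pz by (simp add: prim_def)
    define N where "N = length X0 + length x'"
    have e1: "suffix N (X0 \<frown> Y0\<^sup>\<omega>) = (rotate (length x') Y0)\<^sup>\<omega>"
      using iter_suffix[OF Y0ne] by (simp add: N_def)
    have e2: "suffix N (x' \<frown> z\<^sup>\<omega>) = (rotate (length X0) z)\<^sup>\<omega>"
      using iter_suffix[OF zne] by (simp add: N_def)
    have eqw: "(rotate (length x') Y0)\<^sup>\<omega> = (rotate (length X0) z)\<^sup>\<omega>"
      using e1 e2 I0'(2) zw by metis
    have "length (rotate (length x') Y0) = length (rotate (length X0) z)"
      using prim_same_len[OF prim_rotate prim_rotate eqw] I0'(1) pz by simp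
    then have req: "rotate (length x') Y0 = rotate (length X0) z"
      using iter_eq_len[OF _ _ eqw] Y0ne by simp
    have lz: "length z = length Y0" using \<open>length (rotate _ Y0) = _\<close> by simp
    define c where "c = length Y0 - length X0 mod length Y0 + length x'"
    have "rotate (length Y0 - length X0 mod length Y0) (rotate (length X0) z) = z"
    proof -
      have "rotate (length Y0 - length X0 mod length Y0) (rotate (length X0) z)
            = rotate (length Y0 - length X0 mod length Y0 + length X0) z" by (simp add: rotate_rotate)
      also have "\<dots> = rotate 0 z"
        using mod_aux[of "length Y0" "length X0"] Y0ne lz by (metis rotate_conv_mod length_greater_0_conv)
      finally show ?thesis by simp
    qed
    then have "rotate (length Y0 - length X0 mod length Y0) (rotate (length x') Y0) = z"
      using req by simp
    then have "z = rotate c Y0" unfolding c_def rotate_rotate by simp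
    then have zc: "z = rotate (c mod length Y0) Y0" by (metis rotate_conv_mod)
    define k where "k = c mod length Y0"
    have kn: "k < length Y0" using Y0ne by (simp add: k_def)
    obtain xk yk where sk: "sf_seq u v k = (xk, yk)" by (cases "sf_seq u v k") auto
    note Ik = seq_inv[OF assms(1) sk]
    have ykz: "yk = z" using Ik zc s0 by (simp add: k_def)
    have "xk = x'" using uniq_x[OF pz _ _ zn] Ik ykz zw by auto
    then have "s = map Sym (fst (sf_seq u v k) @ pow (snd (sf_seq u v k)) i) @ [Dollar]
            @ map Sym (pow (snd (sf_seq u v k)) j)" using s i j sk ykz by simp
    then show "s \<in> (\<Union>k<length (snd (sf_seq u v 0)).
          {map Sym (fst (sf_seq u v k) @ pow (snd (sf_seq u v k)) i) @ [Dollar]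
            @ map Sym (pow (snd (sf_seq u v k)) j) | i j. j \<ge> 1})"
      using kn j(1) s0 by auto
  qed
qed

end
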